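(* Let $n\ge 1$, $a=(a_1,\dots,a_n)\in\mathbb{R}^n$, $\omega=(\omega_1,\dots,\omega_n)\in\mathbb{R}^n$, $\varphi=(\varphi_1,\dots,\varphi_n)\in\mathbb{R}^n$ and $b\in\mathbb{R}$, and define $h:\mathbb{R}\to\mathbb{R}$ by $$h(x)=\sin\Big(\sum_{i=1}^n a_i\sin(\omega_i x+\varphi_i)+b\Big).$$ Then for every $x\in\mathbb{R}$, $$h(x)=\sum_{\mathbf{k}\in\mathbb{Z}^n}\alpha_{\mathbf{k}}(a)\,\sin\Big(\sum_{i=1}^n k_i(\omega_i x+\varphi_i)+b\Big),\qquad \text{where } \alpha_{\mathbf{k}}(a)=\prod_{i=1}^n J_{k_i}(a_i).$$
   Context: For an integer $k$, $J_k$ denotes the Bessel function of the first kind of order $k$. The function $h$ is called a sinusoidal neuron of width $n$ with amplitudes $a$, frequencies $\omega$, phases $\varphi$ and bias $b$. Here $\mathbf{k}=(k_1,\dots,k_n)$. *)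

theory Defs
  imports "HOL-Analysis.Analysis"
begin

definition bessel_J :: "int \<Rightarrow> real \<Rightarrow> real" where
  "bessel_J k x =
     (let K = nat \<bar>k\<bar>
      in (if k < 0 then (-1) ^ K else 1) *
         (\<Sum>m. (-1) ^ m / (fact m * fact (m + K)) * (x / 2) ^ (2 * m + K)))"

definition sin_neuron :: "real ^ 'n::finite \<Rightarrow> real ^ 'n \<Rightarrow> real ^ 'n \<Rightarrow> real \<Rightarrow> real \<Rightarrow> real" where
  "sin_neuron a \<omega> \<phi> b x = sin ((\<Sum>i\<in>UNIV. a $ i * sin (\<omega> $ i * x + \<phi> $ i)) + b)"

end

theory Submission
  imports Defs
begin

lemma exp_has_sum_c: "((\<lambda>p::nat. w^p / fact p) has_sum exp (w::complex)) UNIV"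
proof -
  have "(\<lambda>n. w^n /\<^sub>R fact n) sums exp w" by (rule exp_converges)
  hence s: "(\<lambda>n. w^n / fact n) sums exp w" by (simp add: scaleR_conv_of_real divide_inverse mult.commute)
  have "summable (\<lambda>n. norm (w^n /\<^sub>R fact n))" by (rule summable_norm_exp)
  hence "summable (\<lambda>n. norm (w^n / fact n))" by (simp add: scaleR_conv_of_real divide_inverse mult.commute)
  thus ?thesis using s by (rule norm_summable_imp_has_sum)
qed

lemma has_sum_times_c:
  fixes f g :: "_ \<Rightarrow> complex"
  assumes f: "(f has_sum s) A" and g: "(g has_sum t) B"
  shows "((\<lambda>(x,y). f x * g y) has_sum s * t) (A \<times> B)"
proof (rule has_sum_SigmaI)
  show "((\<lambda>y. (\<lambda>(x,y). f x * g y) (x, y)) has_sum f x * t) B" if "x \<in> A" for x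
    using has_sum_cmult_right[OF g, of "f x"] by simp
  show "((\<lambda>x. f x * t) has_sum s * t) A" using has_sum_cmult_left[OF f] .
  have fa: "(\<lambda>x. norm (f x)) summable_on A" using f summable_on_iff_abs_summable_on_complex has_sum_imp_summable by blast
  have ga: "(\<lambda>x. norm (g x)) summable_on B" using g summable_on_iff_abs_summable_on_complex has_sum_imp_summable by blast
  have "(\<lambda>z. norm ((\<lambda>(x,y). f x * g y) z)) summable_on Sigma A (\<lambda>_. B)"
  proof (rule iffD2[OF Infinite_Sum.abs_summable_on_Sigma_iff], intro conjI ballI)
    fix x assume "x \<in> A"
    show "(\<lambda>y. norm ((\<lambda>(x,y). f x * g y) (x, y))) summable_on B"
      using summable_on_cmult_right[OF ga, of "norm (f x)"] by (simp add: norm_mult)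
  next
    have "(\<lambda>x. norm (norm (f x) * infsum (\<lambda>y. norm (g y)) B)) summable_on A"
      using summable_on_cmult_left[OF fa, of "infsum (\<lambda>y. norm (g y)) B"] by (simp add: infsum_nonneg)
    moreover have "infsum (\<lambda>y. norm ((\<lambda>(x,y). f x * g y) (x, y))) B = norm (f x) * infsum (\<lambda>y. norm (g y)) B" for x
      by (simp add: norm_mult infsum_cmult_right')
    ultimately show "(\<lambda>x. norm (infsum (\<lambda>y. norm ((\<lambda>(x,y). f x * g y) (x, y))) B)) summable_on A" by simp
  qed
  thus "(\<lambda>(x,y). f x * g y) summable_on Sigma A (\<lambda>_. B)"
    using summable_on_iff_abs_summable_on_complex by blast
qed

lemma has_sum_prod_PiE_c:
  fixes f :: "'a \<Rightarrow> 'b \<Rightarrow> complex"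
  assumes "finite A" "\<And>x. x \<in> A \<Longrightarrow> (f x has_sum s x) (B x)"
  shows "((\<lambda>g. \<Prod>x\<in>A. f x (g x)) has_sum (\<Prod>x\<in>A. s x)) (PiE A B)"
  using assms
proof (induction A rule: finite_induct)
  case empty
  then show ?case using has_sum_finite[of "{\<lambda>x. undefined}" "\<lambda>_. 1::complex"] by simp
next
  case (insert x F)
  have IH: "((\<lambda>g. \<Prod>z\<in>F. f z (g z)) has_sum (\<Prod>z\<in>F. s z)) (PiE F B)"
    using insert by auto
  have fx: "(f x has_sum s x) (B x)" using insert by auto
  have T: "((\<lambda>(g,y). (\<Prod>z\<in>F. f z (g z)) * f x y) has_sum (\<Prod>z\<in>F. s z) * s x) (PiE F B \<times> B x)"
    using has_sum_times_c[OF IH fx] .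
  have pi: "PiE (insert x F) B = (\<lambda>(g,y). g(x:=y)) ` (PiE F B \<times> B x)"
    unfolding PiE_insert_eq
    by (subst swap_product [symmetric]) (simp add: image_image case_prod_unfold)
  have inj: "inj_on (\<lambda>(g, y). g(x := y)) (Pi\<^sub>E F B \<times> B x)"
    using \<open>x \<notin> F\<close> by (rule inj_combinator')
  have eq: "((\<lambda>g. \<Prod>z\<in>insert x F. f z (g z)) \<circ> (\<lambda>(g,y). g(x:=y))) = (\<lambda>(g,y). (\<Prod>z\<in>F. f z (g z)) * f x y)"
  proof (rule ext, clarify)
    fix g y
    have "(\<Prod>z\<in>F. f z ((g(x := y)) z)) = (\<Prod>z\<in>F. f z (g z))"
      using insert.hyps by (intro prod.cong) auto
    thus "((\<lambda>g. \<Prod>z\<in>insert x F. f z (g z)) \<circ> (\<lambda>(g,y). g(x:=y))) (g, y) = (\<Prod>z\<in>F. f z (g z)) * f x y"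
      using insert.hyps by (simp add: mult.commute)
  qed
  show ?case
    unfolding pi has_sum_reindex[OF inj] eq
    using T insert.hyps by (simp add: mult.commute)
qed

definition bt :: "nat \<Rightarrow> real \<Rightarrow> nat \<Rightarrow> real" where
  "bt K a m = (-1)^m / (fact m * fact (m+K)) * (a/2)^(2*m+K)"

lemma bessel_J_alt: "bessel_J k a = (if k<0 then (-1)^(nat \<bar>k\<bar>) else 1) * suminf (bt (nat \<bar>k\<bar>) a)"
  by (simp add: bessel_J_def Let_def bt_def[abs_def])

lemma key_identity:
  fixes c z w :: complex and K m :: nat
  assumes zw: "z * w = -1"
  shows "(c*z)^(m+K) / fact (m+K) * ((c*w)^m / fact m) = z^K * complex_of_real ((-1)^m / (fact m * fact (m+K))) * c^(2*m+K)"
    and "(c*z)^m / fact m * ((c*w)^(m+K) / fact (m+K)) = w^K * complex_of_real ((-1)^m / (fact m * fact (m+K))) * c^(2*m+K)"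
proof -
  have cc: "c^(2*m+K) = c^m * c^m * c^K" by (simp add: power_add mult_2)
  have p1: "(c*z)^(m+K) * (c*w)^m = z^K * (-1)^m * c^(2*m+K)"
  proof -
    have "(c*z)^(m+K) * (c*w)^m = z^K * (z*w)^m * c^(2*m+K)"
      unfolding cc by (simp add: power_mult_distrib power_add mult_ac)
    thus ?thesis by (simp add: zw)
  qed
  have p2: "(c*z)^m * (c*w)^(m+K) = w^K * (-1)^m * c^(2*m+K)"
  proof -
    have "(c*z)^m * (c*w)^(m+K) = w^K * (z*w)^m * c^(2*m+K)"
      unfolding cc by (simp add: power_mult_distrib power_add mult_ac)
    thus ?thesis by (simp add: zw)
  qed
  show "(c*z)^(m+K) / fact (m+K) * ((c*w)^m / fact m) = z^K * complex_of_real ((-1)^m / (fact m * fact (m+K))) * c^(2*m+K)"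
    using p1 by (simp add: field_simps)
  show "(c*z)^m / fact m * ((c*w)^(m+K) / fact (m+K)) = w^K * complex_of_real ((-1)^m / (fact m * fact (m+K))) * c^(2*m+K)"
    using p2 by (simp add: field_simps)
qed

lemma real_series_has_sum:
  fixes t :: "nat \<Rightarrow> real" and u :: complex
  assumes "u \<noteq> 0" "(\<lambda>m. u * complex_of_real (t m)) summable_on UNIV"
  shows "((\<lambda>m. u * complex_of_real (t m)) has_sum u * complex_of_real (suminf t)) UNIV"
proof -
  have "(\<lambda>m. complex_of_real (t m)) summable_on UNIV"
    by (rule iffD1[OF summable_on_cmult_right'[OF assms(1)] assms(2)])
  hence "(\<lambda>m. Re (complex_of_real (t m))) summable_on UNIV"
    by (rule summable_on_bounded_linear[OF bounded_linear_Re])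
  hence "t summable_on UNIV" by simp
  hence ht: "(t has_sum infsum t UNIV) UNIV" by (rule has_sum_infsum)
  hence "t sums infsum t UNIV" by (rule has_sum_imp_sums)
  hence "suminf t = infsum t UNIV" by (rule sums_unique[symmetric])
  with ht have "(t has_sum suminf t) UNIV" by simp
  hence "((\<lambda>m. complex_of_real (t m)) has_sum complex_of_real (suminf t)) UNIV"
    by (rule has_sum_bounded_linear[OF bounded_linear_of_real])
  thus ?thesis by (rule has_sum_cmult_right)
qed

lemma jacobi_anger:
  fixes a \<theta> :: real
  shows "((\<lambda>k::int. complex_of_real (bessel_J k a) * cis (of_int k * \<theta>)) has_sum cis (a * sin \<theta>)) UNIV"
proof -
  define c where "c = complex_of_real (a/2)"
  define z where "z = cis \<theta>"
  define w where "w = - cis (-\<theta>)"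
  define f :: "nat \<times> nat \<Rightarrow> complex" where "f = (\<lambda>(p,q). (c*z)^p / fact p * ((c*w)^q / fact q))"
  have zw: "z * w = -1" by (simp add: z_def w_def cis_mult)
  have H1: "(f has_sum exp (c*z) * exp (c*w)) (UNIV \<times> UNIV)"
    unfolding f_def by (rule has_sum_times_c[OF exp_has_sum_c exp_has_sum_c])
  have S: "c*z + c*w = \<i> * complex_of_real (a * sin \<theta>)"
    by (simp add: c_def z_def w_def complex_eq_iff)
  have E: "exp (c*z) * exp (c*w) = cis (a * sin \<theta>)"
  proof -
    have "exp (c*z) * exp (c*w) = exp (c*z + c*w)" by (rule exp_add[symmetric])
    also have "\<dots> = exp (\<i> * complex_of_real (a * sin \<theta>))" by (simp only: S)
    also have "\<dots> = cis (a * sin \<theta>)" by (simp add: cis_conv_exp)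
    finally show ?thesis .
  qed
  define j :: "int \<times> nat \<Rightarrow> nat \<times> nat" where
    "j = (\<lambda>(k, m). if k \<ge> 0 then (m + nat k, m) else (m, m + nat (-k)))"
  define i :: "nat \<times> nat \<Rightarrow> int \<times> nat" where "i = (\<lambda>(p, q). (int p - int q, min p q))"
  have "((f \<circ> j) has_sum cis (a * sin \<theta>)) (UNIV \<times> UNIV) = (f has_sum cis (a * sin \<theta>)) (UNIV \<times> UNIV)"
    by (rule has_sum_reindex_bij_witness[where i=i and j=j]) (auto simp: i_def j_def)
  with H1 E have H2: "((f \<circ> j) has_sum cis (a * sin \<theta>)) (UNIV \<times> UNIV)" by simp
  define u where "u = (\<lambda>k::int. (if k<0 then (-1)^(nat \<bar>k\<bar>) else 1) * cis (of_int k * \<theta>))"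
  have cpow: "c^n = complex_of_real ((a/2)^n)" for n by (simp add: c_def)
  have fj: "(f \<circ> j) (k, m) = u k * complex_of_real (bt (nat \<bar>k\<bar>) a m)" for k m
  proof (cases "k \<ge> 0")
    case True
    then obtain K where K: "k = int K" by (metis nonneg_int_cases)
    have nk: "nat \<bar>k\<bar> = K" using K by simp
    have zK: "z^K = cis (of_int k * \<theta>)" by (simp add: z_def Complex.DeMoivre K)
    have "(f \<circ> j) (k, m) = (c*z)^(m+K) / fact (m+K) * ((c*w)^m / fact m)"
      by (simp add: f_def j_def K)
    also have "\<dots> = z^K * complex_of_real ((-1)^m / (fact m * fact (m+K))) * c^(2*m+K)"
      by (rule key_identity(1)[OF zw])
    also have "\<dots> = z^K * complex_of_real ((-1)^m / (fact m * fact (m+K)) * (a/2)^(2*m+K))"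
      by (simp only: cpow of_real_mult mult.assoc)
    also have "\<dots> = u k * complex_of_real (bt (nat \<bar>k\<bar>) a m)"
      using True by (simp only: zK u_def bt_def nk) simp
    finally show ?thesis .
  next
    case False
    then obtain K where K: "k = - int K" by (metis nle_le nonpos_int_cases)
    have "cis (-\<theta>) ^ K = cis (of_int k * \<theta>)" by (simp add: Complex.DeMoivre K)
    moreover have "w^K = (-1)^K * cis (-\<theta>) ^ K" unfolding w_def by (rule power_minus)
    ultimately have wK: "w^K = (-1)^K * cis (of_int k * \<theta>)" by simp
    have nk: "nat \<bar>k\<bar> = K" using K by simp
    have "(f \<circ> j) (k, m) = (c*z)^m / fact m * ((c*w)^(m+K) / fact (m+K))"
      using False by (simp add: f_def j_def K)
    also have "\<dots> = w^K * complex_of_real ((-1)^m / (fact m * fact (m+K))) * c^(2*m+K)"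
      by (rule key_identity(2)[OF zw])
    also have "\<dots> = w^K * complex_of_real ((-1)^m / (fact m * fact (m+K)) * (a/2)^(2*m+K))"
      by (simp only: cpow of_real_mult mult.assoc)
    also have "\<dots> = u k * complex_of_real (bt (nat \<bar>k\<bar>) a m)"
      using False by (simp only: wK u_def bt_def nk) simp
    finally show ?thesis .
  qed
  have inner: "((\<lambda>m. (f \<circ> j) (k, m)) has_sum complex_of_real (bessel_J k a) * cis (of_int k * \<theta>)) UNIV" for k
  proof -
    have s: "(\<lambda>(x,y). (f \<circ> j) (x, y)) summable_on Sigma UNIV (\<lambda>_. UNIV)"
    proof -
      have e: "(\<lambda>(x,y). (f \<circ> j) (x, y)) = f \<circ> j" by (rule ext) auto
      show ?thesis unfolding e using H2 by (rule has_sum_imp_summable)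
    qed
    have "(\<lambda>m. (f \<circ> j) (k, m)) summable_on UNIV"
      using summable_on_SigmaD1[OF s, of k] by simp
    hence "(\<lambda>m. u k * complex_of_real (bt (nat \<bar>k\<bar>) a m)) summable_on UNIV"
      by (simp add: fj[simplified])
    moreover have "u k \<noteq> 0" by (simp add: u_def)
    ultimately have "((\<lambda>m. u k * complex_of_real (bt (nat \<bar>k\<bar>) a m)) has_sum u k * complex_of_real (suminf (bt (nat \<bar>k\<bar>) a))) UNIV"
      using real_series_has_sum by blast
    moreover have "u k * complex_of_real (suminf (bt (nat \<bar>k\<bar>) a)) = complex_of_real (bessel_J k a) * cis (of_int k * \<theta>)"
      by (simp add: u_def bessel_J_alt)
    ultimately show ?thesis by (simp add: fj[simplified])
  qed
  show ?thesis
    by (rule has_sum_Sigma'[OF H2 inner])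
qed

lemma cis_sum_fin: "finite I \<Longrightarrow> (\<Prod>i\<in>I. cis (t i)) = cis (\<Sum>i\<in>I. t i)"
  by (induction I rule: finite_induct) (auto simp: cis_mult)

theorem theorem1:
  fixes a \<omega> \<phi> :: "real ^ 'n::finite" and b x :: real
  shows "((\<lambda>k :: int ^ 'n. (\<Prod>i\<in>UNIV. bessel_J (k $ i) (a $ i)) *
            sin ((\<Sum>i\<in>UNIV. of_int (k $ i) * (\<omega> $ i * x + \<phi> $ i)) + b))
          has_sum sin_neuron a \<omega> \<phi> b x) UNIV"
proof -
  define th where "th = (\<lambda>i. \<omega> $ i * x + \<phi> $ i)"
  define F where "F = (\<lambda>i (k::int). complex_of_real (bessel_J k (a $ i)) * cis (of_int k * th i))"
  have P: "((\<lambda>g. \<Prod>i\<in>UNIV. F i (g i)) has_sum (\<Prod>i\<in>UNIV. cis (a $ i * sin (th i)))) (PiE UNIV (\<lambda>_. UNIV))"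
    by (rule has_sum_prod_PiE_c) (auto simp: F_def jacobi_anger)
  hence P1: "((\<lambda>g. \<Prod>i\<in>UNIV. F i (g i)) has_sum cis (\<Sum>i\<in>UNIV. a $ i * sin (th i))) UNIV"
    by (simp add: cis_sum_fin)
  have "((\<lambda>k::int^'n. \<Prod>i\<in>UNIV. F i (k $ i)) has_sum cis (\<Sum>i\<in>UNIV. a $ i * sin (th i))) UNIV
       = ((\<lambda>g. \<Prod>i\<in>UNIV. F i (g i)) has_sum cis (\<Sum>i\<in>UNIV. a $ i * sin (th i))) UNIV"
    by (rule has_sum_reindex_bij_witness[where i=vec_lambda and j=vec_nth]) (auto simp: vec_nth_inverse)
  with P1 have P2: "((\<lambda>k::int^'n. \<Prod>i\<in>UNIV. F i (k $ i)) has_sum cis (\<Sum>i\<in>UNIV. a $ i * sin (th i))) UNIV"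
    by simp
  have P3: "((\<lambda>k::int^'n. (\<Prod>i\<in>UNIV. F i (k $ i)) * cis b) has_sum cis (\<Sum>i\<in>UNIV. a $ i * sin (th i)) * cis b) UNIV"
    by (rule has_sum_cmult_left[OF P2])
  have P4: "((\<lambda>k::int^'n. Im ((\<Prod>i\<in>UNIV. F i (k $ i)) * cis b)) has_sum Im (cis (\<Sum>i\<in>UNIV. a $ i * sin (th i)) * cis b)) UNIV"
    by (rule has_sum_bounded_linear[OF bounded_linear_Im P3])
  have e1: "Im ((\<Prod>i\<in>UNIV. F i (k $ i)) * cis b) = (\<Prod>i\<in>UNIV. bessel_J (k $ i) (a $ i)) *
            sin ((\<Sum>i\<in>UNIV. of_int (k $ i) * (\<omega> $ i * x + \<phi> $ i)) + b)" for k :: "int^'n"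
  proof -
    have "(\<Prod>i\<in>UNIV. F i (k $ i)) = complex_of_real (\<Prod>i\<in>UNIV. bessel_J (k $ i) (a $ i)) * cis (\<Sum>i\<in>UNIV. of_int (k $ i) * th i)"
      by (simp add: F_def prod.distrib cis_sum_fin)
    hence "(\<Prod>i\<in>UNIV. F i (k $ i)) * cis b = complex_of_real (\<Prod>i\<in>UNIV. bessel_J (k $ i) (a $ i)) * cis ((\<Sum>i\<in>UNIV. of_int (k $ i) * th i) + b)"
      by (simp add: cis_mult mult.assoc)
    thus ?thesis by (simp add: th_def del: of_real_prod)
  qed
  have e2: "Im (cis (\<Sum>i\<in>UNIV. a $ i * sin (th i)) * cis b) = sin_neuron a \<omega> \<phi> b x"
    by (simp add: cis_mult sin_neuron_def th_def)
  show ?thesis using P4 unfolding e1 e2 .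
qed

end
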